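(* Let $(\bm u^{\mathrm d}(t),\bm y^{\mathrm d}(t))_{t=0}^{T-1}$, with $T>1$, be data points each belonging to $\mathscr{B}_{\mathrm{DF}}$, and let $H\doteq\begin{bmatrix}\bm u^{\mathrm d}(0) & \cdots & \bm u^{\mathrm d}(T-1)\\ \bm y^{\mathrm d}(0) & \cdots & \bm y^{\mathrm d}(T-1)\end{bmatrix}\in\mathbb{R}^{(6n+1)\times T}$. Assume $\operatorname{rank} H = 3n+1$. Then a point $(u,y)\in\mathbb{R}^{2n}\times\mathbb{R}^{4n+1}$ with $u=(p,q)$ and $y=(P,Q,\ell,\mathsf v,\mathsf v_0)$ belongs to $\mathscr{B}_{\mathrm{DF}}$ if and only if there exists $g\in\mathbb{R}^{T}$ such that $\begin{bmatrix}u\\ y\end{bmatrix}=Hg$ and $\mathsf v\odot\ell=P\odot P+Q\odot Q$, where $\odot$ denotes the element-wise product.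
   Context: Network: a tree with nodes $\mathcal N=\{0,1,\dots,n\}$ rooted at the slack node $0$; $\mathcal N_+=\{1,\dots,n\}$. Each $i\in\mathcal N_+$ has a unique parent $\pi(i)\in\mathcal N$, and the edge $(i,\pi(i))$ carries resistance $\mathtt r_i\ge 0$ and reactance $\mathtt x_i\ge0$ with $\mathtt r_i^2+\mathtt x_i^2\neq 0$. Variables: nodal net injections $p,q\in\mathbb{R}^n$, branch flows $P,Q\in\mathbb{R}^n$, squared branch currents $\ell\in\mathbb{R}^n$, squared voltage magnitudes $\mathsf v\in\mathbb{R}^n$ at nodes of $\mathcal N_+$, and slack squared voltage $\mathsf v_0\in\mathbb{R}$ (all vectors indexed by $\mathcal N_+$). The DistFlow equations are, for every $i\in\mathcal N_+$ with $j=\pi(i)$: (1) $P_i=p_i+\sum_{k:\pi(k)=i}(P_k-\mathtt r_k\ell_k)$; (2) $Q_i=q_i+\sum_{k:\pi(k)=i}(Q_k-\mathtt x_k\ell_k)$; (3) $\mathsf v_j=\mathsf v_i-2(\mathtt r_iP_i+\mathtt x_iQ_i)+(\mathtt r_i^2+\mathtt x_i^2)\ell_i$ (with $\mathsf v_j=\mathsf v_0$ when $j=0$); (4) $\ell_i\mathsf v_i=P_i^2+Q_i^2$. Input $u=(p,q)\in\mathbb{R}^{2n}$, output $y=(P,Q,\ell,\mathsf v,\mathsf v_0)\in\mathbb{R}^{4n+1}$ (vertical stacking in this order). $\mathscr{B}_{\mathrm{DF}}\subset\mathbb{R}^{2n}\times\mathbb{R}^{4n+1}$ is the set of all $(u,y)$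 satisfying (1)–(4). *)

theory Defs
  imports "Jordan_Normal_Form.DL_Rank"
begin

text \<open>Radial network: nodes 0..n, root 0; par i is the parent of node i (1 \<le> i \<le> n).\<close>
definition is_tree :: "nat \<Rightarrow> (nat \<Rightarrow> nat) \<Rightarrow> bool" where
  "is_tree n par \<longleftrightarrow> (\<forall>i\<in>{1..n}. par i \<le> n \<and> (\<exists>k. (par ^^ k) i = 0))"

definition line_params :: "nat \<Rightarrow> (nat \<Rightarrow> real) \<Rightarrow> (nat \<Rightarrow> real) \<Rightarrow> bool" where
  "line_params n r x \<longleftrightarrow> (\<forall>i\<in>{1..n}. r i \<ge> 0 \<and> x i \<ge> 0 \<and> (r i)^2 + (x i)^2 \<noteq> 0)"

text \<open>Components of u = (p,q) \<in> R^(2n) and y = (P,Q,l,v,v0) \<in> R^(4n+1), indexed by nodes 1..n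
  (vectors are 0-indexed in Jordan_Normal_Form).\<close>
definition pp :: "nat \<Rightarrow> real vec \<Rightarrow> nat \<Rightarrow> real" where "pp n u i = u $ (i - 1)"
definition qq :: "nat \<Rightarrow> real vec \<Rightarrow> nat \<Rightarrow> real" where "qq n u i = u $ (n + i - 1)"
definition PP :: "nat \<Rightarrow> real vec \<Rightarrow> nat \<Rightarrow> real" where "PP n y i = y $ (i - 1)"
definition QQ :: "nat \<Rightarrow> real vec \<Rightarrow> nat \<Rightarrow> real" where "QQ n y i = y $ (n + i - 1)"
definition LL :: "nat \<Rightarrow> real vec \<Rightarrow> nat \<Rightarrow> real" where "LL n y i = y $ (2*n + i - 1)"
definition VV :: "nat \<Rightarrow> real vec \<Rightarrow> nat \<Rightarrow> real" where "VV n y i = y $ (3*n + i - 1)"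
definition V0 :: "nat \<Rightarrow> real vec \<Rightarrow> real" where "V0 n y = y $ (4*n)"

text \<open>Squared voltage at node j, with node 0 the slack node.\<close>
definition volt :: "nat \<Rightarrow> real vec \<Rightarrow> nat \<Rightarrow> real" where
  "volt n y j = (if j = 0 then V0 n y else VV n y j)"

definition B_DF :: "nat \<Rightarrow> (nat \<Rightarrow> nat) \<Rightarrow> (nat \<Rightarrow> real) \<Rightarrow> (nat \<Rightarrow> real) \<Rightarrow> (real vec \<times> real vec) set" where
  "B_DF n par r x = {(u, y). u \<in> carrier_vec (2*n) \<and> y \<in> carrier_vec (4*n+1) \<and>
     (\<forall>i\<in>{1..n}.
        PP n y i = pp n u i + (\<Sum>k\<in>{k\<in>{1..n}. par k = i}. PP n y k - r k * LL n y k) \<and>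
        QQ n y i = qq n u i + (\<Sum>k\<in>{k\<in>{1..n}. par k = i}. QQ n y k - x k * LL n y k) \<and>
        volt n y (par i) = VV n y i - 2 * (r i * PP n y i + x i * QQ n y i)
                            + ((r i)^2 + (x i)^2) * LL n y i \<and>
        LL n y i * VV n y i = (PP n y i)^2 + (QQ n y i)^2)}"

definition data_mat :: "nat \<Rightarrow> nat \<Rightarrow> (nat \<Rightarrow> real vec) \<Rightarrow> (nat \<Rightarrow> real vec) \<Rightarrow> real mat" where
  "data_mat n T ud yd = mat (6*n+1) T (\<lambda>(i, t). (ud t @\<^sub>v yd t) $ i)"

end

theory Submission
  imports Defs
begin

definition wvolt :: "nat \<Rightarrow> real vec \<Rightarrow> nat \<Rightarrow> real" where
  "wvolt n w j = (if j = 0 then w $ (6*n) else w $ (5*n + j - 1))"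

definition LIN :: "nat \<Rightarrow> (nat \<Rightarrow> nat) \<Rightarrow> (nat \<Rightarrow> real) \<Rightarrow> (nat \<Rightarrow> real) \<Rightarrow> real vec \<Rightarrow> bool" where
  "LIN n par r x w \<longleftrightarrow> (\<forall>i\<in>{1..n}.
     w $ (2*n+i-1) = w $ (i-1) + (\<Sum>k\<in>{k\<in>{1..n}. par k = i}. w $ (2*n+k-1) - r k * w $ (4*n+k-1)) \<and>
     w $ (3*n+i-1) = w $ (n+i-1) + (\<Sum>k\<in>{k\<in>{1..n}. par k = i}. w $ (3*n+k-1) - x k * w $ (4*n+k-1)) \<and>
     wvolt n w (par i) = w $ (5*n+i-1) - 2 * (r i * w $ (2*n+i-1) + x i * w $ (3*n+i-1))
                            + ((r i)^2 + (x i)^2) * w $ (4*n+i-1))"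

lemma bdf_iff:
  assumes tree: "is_tree n par" and u: "u \<in> carrier_vec (2*n)" and y: "y \<in> carrier_vec (4*n+1)"
  shows "(u, y) \<in> B_DF n par r x \<longleftrightarrow> LIN n par r x (u @\<^sub>v y) \<and>
     (\<forall>i\<in>{1..n}. LL n y i * VV n y i = (PP n y i)^2 + (QQ n y i)^2)"
proof -
  have du: "dim_vec u = 2*n" and dy: "dim_vec y = 4*n+1" using u y by auto
  have A: "\<And>j. j < 2*n \<Longrightarrow> (u @\<^sub>v y) $ j = u $ j" using du dy by simp
  have B: "\<And>j. j < 4*n+1 \<Longrightarrow> (u @\<^sub>v y) $ (2*n+j) = y $ j" using du dy by simp
  have par: "\<And>i. i \<in> {1..n} \<Longrightarrow> par i \<le> n" using tree unfolding is_tree_def by auto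
  have E: "\<forall>i\<in>{1..n}. pp n u i = (u @\<^sub>v y) $ (i-1) \<and> qq n u i = (u @\<^sub>v y) $ (n+i-1)
     \<and> PP n y i = (u @\<^sub>v y) $ (2*n+i-1) \<and> QQ n y i = (u @\<^sub>v y) $ (3*n+i-1)
     \<and> LL n y i = (u @\<^sub>v y) $ (4*n+i-1) \<and> VV n y i = (u @\<^sub>v y) $ (5*n+i-1)
     \<and> volt n y (par i) = wvolt n (u @\<^sub>v y) (par i)"
  proof
    fix i assume i: "i \<in> {1..n}"
    have 1: "2*n+(i-1) = 2*n+i-1" "2*n+(n+i-1) = 3*n+i-1" "2*n+(2*n+i-1) = 4*n+i-1"
      "2*n+(3*n+i-1) = 5*n+i-1" "2*n+(4*n) = 6*n" "2*n+(3*n+par i-1) = 5*n+par i-1" using i by auto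
    show "pp n u i = (u @\<^sub>v y) $ (i-1) \<and> qq n u i = (u @\<^sub>v y) $ (n+i-1)
     \<and> PP n y i = (u @\<^sub>v y) $ (2*n+i-1) \<and> QQ n y i = (u @\<^sub>v y) $ (3*n+i-1)
     \<and> LL n y i = (u @\<^sub>v y) $ (4*n+i-1) \<and> VV n y i = (u @\<^sub>v y) $ (5*n+i-1)
     \<and> volt n y (par i) = wvolt n (u @\<^sub>v y) (par i)"
      unfolding pp_def qq_def PP_def QQ_def LL_def VV_def volt_def wvolt_def V0_def
      using A B[of "i-1"] B[of "n+i-1"] B[of "2*n+i-1"] B[of "3*n+i-1"] B[of "4*n"] B[of "3*n+par i-1"] i par[OF i]
      unfolding 1 by auto
  qed
  have E2: "\<forall>i\<in>{1..n}. {k\<in>{1..n}. par k = i} \<subseteq> {1..n}" by auto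
  define w where "w = u @\<^sub>v y"
  have S: "\<And>i. (\<Sum>k\<in>{k\<in>{1..n}. par k = i}. PP n y k - r k * LL n y k) = (\<Sum>k\<in>{k\<in>{1..n}. par k = i}. w $ (2*n+k-1) - r k * w $ (4*n+k-1))"
      "\<And>i. (\<Sum>k\<in>{k\<in>{1..n}. par k = i}. QQ n y k - x k * LL n y k) = (\<Sum>k\<in>{k\<in>{1..n}. par k = i}. w $ (3*n+k-1) - x k * w $ (4*n+k-1))"
    by (rule sum.cong; use E w_def in auto)+
  have P: "\<And>i. i \<in> {1..n} \<Longrightarrow>
     ((PP n y i = pp n u i + (\<Sum>k\<in>{k\<in>{1..n}. par k = i}. PP n y k - r k * LL n y k) \<and>
        QQ n y i = qq n u i + (\<Sum>k\<in>{k\<in>{1..n}. par k = i}. QQ n y k - x k * LL n y k) \<and>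
        volt n y (par i) = VV n y i - 2 * (r i * PP n y i + x i * QQ n y i)
                            + ((r i)^2 + (x i)^2) * LL n y i \<and>
        LL n y i * VV n y i = (PP n y i)^2 + (QQ n y i)^2) \<longleftrightarrow>
     ((w $ (2*n+i-1) = w $ (i-1) + (\<Sum>k\<in>{k\<in>{1..n}. par k = i}. w $ (2*n+k-1) - r k * w $ (4*n+k-1)) \<and>
     w $ (3*n+i-1) = w $ (n+i-1) + (\<Sum>k\<in>{k\<in>{1..n}. par k = i}. w $ (3*n+k-1) - x k * w $ (4*n+k-1)) \<and>
     wvolt n w (par i) = w $ (5*n+i-1) - 2 * (r i * w $ (2*n+i-1) + x i * w $ (3*n+i-1))
                            + ((r i)^2 + (x i)^2) * w $ (4*n+i-1)) \<and>
      LL n y i * VV n y i = (PP n y i)^2 + (QQ n y i)^2))"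
    unfolding S using E w_def by auto
  show ?thesis unfolding B_DF_def LIN_def w_def[symmetric] using u y P by auto
qed
lemma LIN_unique:
  assumes tree: "is_tree n par"
    and w1: "w1 \<in> carrier_vec (6*n+1)" and w2: "w2 \<in> carrier_vec (6*n+1)"
    and L1: "LIN n par r x w1" and L2: "LIN n par r x w2"
    and eqm: "\<And>j. 2*n \<le> j \<Longrightarrow> j < 5*n \<Longrightarrow> w1 $ j = w2 $ j"
    and eq0: "w1 $ (6*n) = w2 $ (6*n)"
  shows "w1 = w2"
proof -
  have par: "\<And>i. i \<in> {1..n} \<Longrightarrow> par i \<le> n" using tree unfolding is_tree_def by auto
  have S: "\<And>i. (\<Sum>k\<in>{k\<in>{1..n}. par k = i}. w1 $ (2*n+k-1) - r k * w1 $ (4*n+k-1)) = (\<Sum>k\<in>{k\<in>{1..n}. par k = i}. w2 $ (2*n+k-1) - r k * w2 $ (4*n+k-1))"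
      "\<And>i. (\<Sum>k\<in>{k\<in>{1..n}. par k = i}. w1 $ (3*n+k-1) - x k * w1 $ (4*n+k-1)) = (\<Sum>k\<in>{k\<in>{1..n}. par k = i}. w2 $ (3*n+k-1) - x k * w2 $ (4*n+k-1))"
    by (rule sum.cong; use eqm in auto)+
  have pq: "w1 $ (i-1) = w2 $ (i-1) \<and> w1 $ (n+i-1) = w2 $ (n+i-1)" if i: "i \<in> {1..n}" for i
  proof -
    have a: "w1 $ (2*n+i-1) = w2 $ (2*n+i-1)" "w1 $ (3*n+i-1) = w2 $ (3*n+i-1)" using eqm i by auto
    have l1: "w1 $ (2*n+i-1) = w1 $ (i-1) + (\<Sum>k\<in>{k\<in>{1..n}. par k = i}. w1 $ (2*n+k-1) - r k * w1 $ (4*n+k-1))"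
        "w1 $ (3*n+i-1) = w1 $ (n+i-1) + (\<Sum>k\<in>{k\<in>{1..n}. par k = i}. w1 $ (3*n+k-1) - x k * w1 $ (4*n+k-1))"
      using L1 i unfolding LIN_def by blast+
    have l2: "w2 $ (2*n+i-1) = w2 $ (i-1) + (\<Sum>k\<in>{k\<in>{1..n}. par k = i}. w2 $ (2*n+k-1) - r k * w2 $ (4*n+k-1))"
        "w2 $ (3*n+i-1) = w2 $ (n+i-1) + (\<Sum>k\<in>{k\<in>{1..n}. par k = i}. w2 $ (3*n+k-1) - x k * w2 $ (4*n+k-1))"
      using L2 i unfolding LIN_def by blast+
    show ?thesis using l1 l2 a S(1)[of i] S(2)[of i] by linarith
  qed
  have V: "\<forall>i\<in>{1..n}. (par ^^ k) i = 0 \<longrightarrow> w1 $ (5*n+i-1) = w2 $ (5*n+i-1)" for k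
  proof (induction k)
    case 0
    then show ?case by auto
  next
    case (Suc k)
    show ?case
    proof (intro ballI impI)
      fix i assume i: "i \<in> {1..n}" and pk: "(par ^^ Suc k) i = 0"
      have vv: "wvolt n w1 (par i) = wvolt n w2 (par i)"
      proof (cases "par i = 0")
        case True
        then show ?thesis using eq0 unfolding wvolt_def by simp
      next
        case False
        then have "par i \<in> {1..n}" using par[OF i] by auto
        moreover have "(par ^^ k) (par i) = 0" using pk by (simp add: funpow_Suc_right del: funpow.simps)
        ultimately show ?thesis using Suc.IH False unfolding wvolt_def by auto
      qed
      have a: "w1 $ (2*n+i-1) = w2 $ (2*n+i-1)" "w1 $ (3*n+i-1) = w2 $ (3*n+i-1)" "w1 $ (4*n+i-1) = w2 $ (4*n+i-1)"
        using eqm i by auto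
      have "wvolt n w1 (par i) = w1 $ (5*n+i-1) - 2 * (r i * w1 $ (2*n+i-1) + x i * w1 $ (3*n+i-1))
                            + ((r i)^2 + (x i)^2) * w1 $ (4*n+i-1)"
           "wvolt n w2 (par i) = w2 $ (5*n+i-1) - 2 * (r i * w2 $ (2*n+i-1) + x i * w2 $ (3*n+i-1))
                            + ((r i)^2 + (x i)^2) * w2 $ (4*n+i-1)"
        using L1 L2 i unfolding LIN_def by blast+
      note e = this
      show "w1 $ (5*n+i-1) = w2 $ (5*n+i-1)" using e(1) e(2)[folded a] vv by linarith
    qed
  qed
  have V': "w1 $ (5*n+i-1) = w2 $ (5*n+i-1)" if i: "i \<in> {1..n}" for i
  proof -
    obtain k where "(par ^^ k) i = 0" using tree i unfolding is_tree_def by blast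
    then show ?thesis using V i by blast
  qed
  show ?thesis
  proof (rule eq_vecI)
    show "dim_vec w1 = dim_vec w2" using w1 w2 by auto
    fix j assume "j < dim_vec w2"
    then have j: "j < 6*n+1" using w2 by auto
    consider "j < n" | "n \<le> j \<and> j < 2*n" | "2*n \<le> j \<and> j < 5*n" | "5*n \<le> j \<and> j < 6*n" | "j = 6*n"
      using j by linarith
    then show "w1 $ j = w2 $ j"
    proof cases
      case 1 then show ?thesis using pq[of "j+1"] by auto
    next
      case 2 then show ?thesis using pq[of "j-n+1"] by auto
    next
      case 3 then show ?thesis using eqm by auto
    next
      case 4 then show ?thesis using V'[of "j-5*n+1"] by auto
    next
      case 5 then show ?thesis using eq0 by auto
    qed
  qed
qed

lemma lin_sum1:
  fixes f :: "nat \<Rightarrow> real"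
  shows "(\<Sum>j<c. (f j + (\<Sum>k\<in>K. g j k - s k * h j k)) * a j) =
    (\<Sum>j<c. f j * a j) + (\<Sum>k\<in>K. (\<Sum>j<c. g j k * a j) - s k * (\<Sum>j<c. h j k * a j))"
proof -
  have "(\<Sum>j<c. (f j + (\<Sum>k\<in>K. g j k - s k * h j k)) * a j) =
     (\<Sum>j<c. f j * a j) + (\<Sum>j<c. \<Sum>k\<in>K. g j k * a j - s k * (h j k * a j))"
    by (simp only: distrib_right sum.distrib sum_distrib_right left_diff_distrib mult.assoc)
  also have "(\<Sum>j<c. \<Sum>k\<in>K. g j k * a j - s k * (h j k * a j)) = (\<Sum>k\<in>K. \<Sum>j<c. g j k * a j - s k * (h j k * a j))"
    by (rule sum.swap)
  also have "\<dots> = (\<Sum>k\<in>K. (\<Sum>j<c. g j k * a j) - s k * (\<Sum>j<c. h j k * a j))"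
    by (simp add: sum_subtractf sum_distrib_left)
  finally show ?thesis .
qed

lemma lin_sum3:
  fixes f :: "nat \<Rightarrow> real"
  shows "(\<Sum>j<c. (f j - 2 * (r * g j + x * h j) + e * l j) * a j) =
    (\<Sum>j<c. f j * a j) - 2 * (r * (\<Sum>j<c. g j * a j) + x * (\<Sum>j<c. h j * a j)) + e * (\<Sum>j<c. l j * a j)"
  by (simp add: algebra_simps sum.distrib sum_subtractf sum_distrib_left)

lemma mult_entry:
  assumes A: "A \<in> carrier_mat N c" and a: "a \<in> carrier_vec c" and i: "i < N"
  shows "(A *\<^sub>v a) $ i = (\<Sum>j<c. col A j $ i * a $ j)"
  using A a i by (auto simp: scalar_prod_def lessThan_atLeast0 intro!: sum.cong)

lemma LIN_mult:
  assumes tree: "is_tree n par" and A: "A \<in> carrier_mat (6*n+1) c" and a: "a \<in> carrier_vec c"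
    and cols: "\<And>j. j < c \<Longrightarrow> LIN n par r x (col A j)"
  shows "LIN n par r x (A *\<^sub>v a)"
proof -
  have par: "\<And>i. i \<in> {1..n} \<Longrightarrow> par i \<le> n" using tree unfolding is_tree_def by auto
  define X where "X = (\<lambda>m. (\<Sum>j<c. col A j $ m * a $ j))"
  have XE: "\<And>m. m < 6*n+1 \<Longrightarrow> (A *\<^sub>v a) $ m = X m" unfolding X_def using mult_entry[OF A a] by blast
  show ?thesis unfolding LIN_def
  proof (intro ballI conjI)
    fix i assume i: "i \<in> {1..n}"
    let ?K = "{k\<in>{1..n}. par k = i}"
    have K: "\<And>k. k \<in> ?K \<Longrightarrow> k \<in> {1..n}" by auto
    have c1: "col A j $ (2*n+i-1) = col A j $ (i-1) + (\<Sum>k\<in>?K. col A j $ (2*n+k-1) - r k * col A j $ (4*n+k-1))" if "j < c" for j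
      using cols[OF that] i unfolding LIN_def by blast
    have "X (2*n+i-1) = (\<Sum>j<c. (col A j $ (i-1) + (\<Sum>k\<in>?K. col A j $ (2*n+k-1) - r k * col A j $ (4*n+k-1))) * a $ j)"
      unfolding X_def by (rule sum.cong[OF refl]) (simp only: lessThan_iff c1)
    also have "\<dots> = X (i-1) + (\<Sum>k\<in>?K. X (2*n+k-1) - r k * X (4*n+k-1))"
      unfolding X_def by (rule lin_sum1)
    finally have e1: "X (2*n+i-1) = X (i-1) + (\<Sum>k\<in>?K. X (2*n+k-1) - r k * X (4*n+k-1))" .
    have s1: "(\<Sum>k\<in>?K. X (2*n+k-1) - r k * X (4*n+k-1)) = (\<Sum>k\<in>?K. (A *\<^sub>v a) $ (2*n+k-1) - r k * (A *\<^sub>v a) $ (4*n+k-1))"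
      by (rule sum.cong; use XE in auto)
    show "(A *\<^sub>v a) $ (2*n+i-1) = (A *\<^sub>v a) $ (i-1) + (\<Sum>k\<in>?K. (A *\<^sub>v a) $ (2*n+k-1) - r k * (A *\<^sub>v a) $ (4*n+k-1))"
    proof -
      have b: "2*n+i-1 < 6*n+1" "i-1 < 6*n+1" using i by auto
      show ?thesis unfolding XE[OF b(1)] XE[OF b(2)] s1[symmetric] by (rule e1)
    qed
    have c2: "col A j $ (3*n+i-1) = col A j $ (n+i-1) + (\<Sum>k\<in>?K. col A j $ (3*n+k-1) - x k * col A j $ (4*n+k-1))" if "j < c" for j
      using cols[OF that] i unfolding LIN_def by blast
    have "X (3*n+i-1) = (\<Sum>j<c. (col A j $ (n+i-1) + (\<Sum>k\<in>?K. col A j $ (3*n+k-1) - x k * col A j $ (4*n+k-1))) * a $ j)"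
      unfolding X_def by (rule sum.cong[OF refl]) (simp only: lessThan_iff c2)
    also have "\<dots> = X (n+i-1) + (\<Sum>k\<in>?K. X (3*n+k-1) - x k * X (4*n+k-1))"
      unfolding X_def by (rule lin_sum1)
    finally have e2: "X (3*n+i-1) = X (n+i-1) + (\<Sum>k\<in>?K. X (3*n+k-1) - x k * X (4*n+k-1))" .
    have s2: "(\<Sum>k\<in>?K. X (3*n+k-1) - x k * X (4*n+k-1)) = (\<Sum>k\<in>?K. (A *\<^sub>v a) $ (3*n+k-1) - x k * (A *\<^sub>v a) $ (4*n+k-1))"
      by (rule sum.cong; use XE in auto)
    show "(A *\<^sub>v a) $ (3*n+i-1) = (A *\<^sub>v a) $ (n+i-1) + (\<Sum>k\<in>?K. (A *\<^sub>v a) $ (3*n+k-1) - x k * (A *\<^sub>v a) $ (4*n+k-1))"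
    proof -
      have b: "3*n+i-1 < 6*n+1" "n+i-1 < 6*n+1" using i by auto
      show ?thesis unfolding XE[OF b(1)] XE[OF b(2)] s2[symmetric] by (rule e2)
    qed
    define id0 where "id0 = (if par i = 0 then 6*n else 5*n + par i - 1)"
    have id0: "id0 < 6*n+1" "\<And>w. wvolt n w (par i) = w $ id0" unfolding id0_def wvolt_def using par[OF i] by auto
    have c3: "col A j $ id0 = col A j $ (5*n+i-1) - 2 * (r i * col A j $ (2*n+i-1) + x i * col A j $ (3*n+i-1))
                            + ((r i)^2 + (x i)^2) * col A j $ (4*n+i-1)" if "j < c" for j
    proof -
      have "wvolt n (col A j) (par i) = col A j $ (5*n+i-1) - 2 * (r i * col A j $ (2*n+i-1) + x i * col A j $ (3*n+i-1))
                            + ((r i)^2 + (x i)^2) * col A j $ (4*n+i-1)"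
        using cols[OF that] i unfolding LIN_def by blast
      then show ?thesis unfolding id0(2) .
    qed
    have "X id0 = (\<Sum>j<c. (col A j $ (5*n+i-1) - 2 * (r i * col A j $ (2*n+i-1) + x i * col A j $ (3*n+i-1))
                            + ((r i)^2 + (x i)^2) * col A j $ (4*n+i-1)) * a $ j)"
      unfolding X_def by (rule sum.cong[OF refl]) (simp only: lessThan_iff c3)
    also have "\<dots> = X (5*n+i-1) - 2 * (r i * X (2*n+i-1) + x i * X (3*n+i-1)) + ((r i)^2 + (x i)^2) * X (4*n+i-1)"
      unfolding X_def by (rule lin_sum3)
    finally have e3: "X id0 = X (5*n+i-1) - 2 * (r i * X (2*n+i-1) + x i * X (3*n+i-1)) + ((r i)^2 + (x i)^2) * X (4*n+i-1)" .
    show "wvolt n (A *\<^sub>v a) (par i) = (A *\<^sub>v a) $ (5*n+i-1) - 2 * (r i * (A *\<^sub>v a) $ (2*n+i-1) + x i * (A *\<^sub>v a) $ (3*n+i-1))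
                            + ((r i)^2 + (x i)^2) * (A *\<^sub>v a) $ (4*n+i-1)"
    proof -
      have b: "5*n+i-1 < 6*n+1" "2*n+i-1 < 6*n+1" "3*n+i-1 < 6*n+1" "4*n+i-1 < 6*n+1" using i by auto
      show ?thesis unfolding id0(2) XE[OF id0(1)] XE[OF b(1)] XE[OF b(2)] XE[OF b(3)] XE[OF b(4)]
        by (rule e3)
    qed
  qed
qed

lemma LIN_zero:
  assumes tree: "is_tree n par"
  shows "LIN n par r x (0\<^sub>v (6*n+1))"
proof -
  have par: "\<And>i. i \<in> {1..n} \<Longrightarrow> par i \<le> n" using tree unfolding is_tree_def by auto
  show ?thesis unfolding LIN_def
  proof (intro ballI conjI)
    fix i assume i: "i \<in> {1..n}"
    have z: "\<And>m. m < 6*n+1 \<Longrightarrow> 0\<^sub>v (6*n+1) $ m = (0::real)" by simp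
    have s: "(\<Sum>k\<in>{k\<in>{1..n}. par k = i}. 0\<^sub>v (6*n+1) $ (2*n+k-1) - r k * 0\<^sub>v (6*n+1) $ (4*n+k-1)) = 0"
      "(\<Sum>k\<in>{k\<in>{1..n}. par k = i}. 0\<^sub>v (6*n+1) $ (3*n+k-1) - x k * 0\<^sub>v (6*n+1) $ (4*n+k-1)) = 0"
      by (rule sum.neutral; auto)+
    show "0\<^sub>v (6*n+1) $ (2*n+i-1) = 0\<^sub>v (6*n+1) $ (i-1) + (\<Sum>k\<in>{k\<in>{1..n}. par k = i}. 0\<^sub>v (6*n+1) $ (2*n+k-1) - r k * 0\<^sub>v (6*n+1) $ (4*n+k-1))"
    proof -
      have b: "2*n+i-1 < 6*n+1" "i-1 < 6*n+1" using i by auto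
      show ?thesis unfolding s index_zero_vec(1)[OF b(1)] index_zero_vec(1)[OF b(2)] by simp
    qed
    show "0\<^sub>v (6*n+1) $ (3*n+i-1) = 0\<^sub>v (6*n+1) $ (n+i-1) + (\<Sum>k\<in>{k\<in>{1..n}. par k = i}. 0\<^sub>v (6*n+1) $ (3*n+k-1) - x k * 0\<^sub>v (6*n+1) $ (4*n+k-1))"
    proof -
      have b: "3*n+i-1 < 6*n+1" "n+i-1 < 6*n+1" using i by auto
      show ?thesis unfolding s index_zero_vec(1)[OF b(1)] index_zero_vec(1)[OF b(2)] by simp
    qed
    show "wvolt n (0\<^sub>v (6*n+1)) (par i) = 0\<^sub>v (6*n+1) $ (5*n+i-1) - 2 * (r i * 0\<^sub>v (6*n+1) $ (2*n+i-1) + x i * 0\<^sub>v (6*n+1) $ (3*n+i-1))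
                            + ((r i)^2 + (x i)^2) * 0\<^sub>v (6*n+1) $ (4*n+i-1)"
    proof -
      have b: "5*n+i-1 < 6*n+1" "2*n+i-1 < 6*n+1" "3*n+i-1 < 6*n+1" "4*n+i-1 < 6*n+1"
        "6*n < 6*n+1" "5*n+par i-1 < 6*n+1" using i par[OF i] by auto
      show ?thesis unfolding wvolt_def index_zero_vec(1)[OF b(1)] index_zero_vec(1)[OF b(2)]
        index_zero_vec(1)[OF b(3)] index_zero_vec(1)[OF b(4)] index_zero_vec(1)[OF b(5)] index_zero_vec(1)[OF b(6)]
        by simp
    qed
  qed
qed

lemma col_data:
  assumes "t < T" "(ud t, yd t) \<in> B_DF n par r x"
  shows "col (data_mat n T ud yd) t = ud t @\<^sub>v yd t"
proof -
  have "ud t \<in> carrier_vec (2*n)" "yd t \<in> carrier_vec (4*n+1)" using assms(2) unfolding B_DF_def by auto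
  then show ?thesis unfolding data_mat_def using assms(1) by (auto intro!: eq_vecI)
qed

lemma span_part:
  assumes tree: "is_tree n par" and Hc: "H \<in> carrier_mat (6*n+1) T"
    and LINH: "\<And>t. t < T \<Longrightarrow> LIN n par r x (col H t)"
    and rank: "vec_space.rank (6*n+1) H = 3*n+1"
    and wc: "w \<in> carrier_vec (6*n+1)" and L: "LIN n par r x w"
  shows "\<exists>g\<in>carrier_vec T. w = H *\<^sub>v g"
proof -
  interpret V: vec_space "TYPE(real)" "6*n+1" .
  define N where "N = 6*n+1"
  define m where "m = 3*n+1"
  let ?P = "\<lambda>T'. T' \<subseteq> set (cols H) \<and> V.lin_indpt T'"
  have P0: "?P {}"
    by (metis (no_types) empty_subsetI V.fin_dim V.finite_basis_exists V.subset_li_is_li vec_vs vectorspace.basis_def)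
  obtain S where fS: "finite S" and max: "maximal S ?P"
    using maximal_exists_superset[of "set (cols H)" ?P "{}"] P0 by auto
  have SH: "S \<subseteq> set (cols H)" and Sind: "V.lin_indpt S" using max unfolding maximal_def by auto
  have cardS: "card S = m" using V.rank_card_indpt[OF Hc max] rank unfolding m_def by simp
  obtain ss where ss: "distinct ss" "set ss = S" using finite_distinct_list[OF fS] by blast
  have lss: "length ss = m" using distinct_card[OF ss(1)] ss(2) cardS by simp
  have Sc: "set ss \<subseteq> carrier_vec N" using SH ss(2) cols_dim[of H] Hc unfolding N_def by auto
  define K where "K = mat_of_cols N ss"
  have Kc: "K \<in> carrier_mat N m" unfolding K_def using lss by auto
  have colsK: "cols K = ss" unfolding K_def using Sc by simp
  have colK: "\<And>j. j < m \<Longrightarrow> col K j = ss ! j" unfolding K_def using Sc lss by (intro col_mat_of_cols) auto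
  have ex: "\<exists>t. t < T \<and> ss ! j = col H t" if j: "j < m" for j
  proof -
    have "ss ! j \<in> set (cols H)" using SH ss(2) j lss by auto
    then obtain t where "t < length (cols H)" "ss ! j = cols H ! t" by (auto simp: in_set_conv_nth)
    then show ?thesis using Hc by auto
  qed
  define tj where "tj j = (SOME t. t < T \<and> ss ! j = col H t)" for j
  have tj: "\<And>j. j < m \<Longrightarrow> tj j < T \<and> ss ! j = col H (tj j)"
    unfolding tj_def using ex by (rule someI_ex)
  have LINK: "\<And>j. j < m \<Longrightarrow> LIN n par r x (col K j)" using tj colK LINH by metis
  define sel where "sel k = (if k < 3*n then 2*n + k else 6*n)" for k
  have selN: "\<And>k. sel k < N" unfolding sel_def N_def by auto
  define M where "M = mat m m (\<lambda>(k,j). K $$ (sel k, j))"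
  have Mc: "M \<in> carrier_mat m m" unfolding M_def by auto
  have Mentry: "(M *\<^sub>v a) $ k = (K *\<^sub>v a) $ (sel k)" if a: "a \<in> carrier_vec m" and k: "k < m" for a k
  proof -
    have "(M *\<^sub>v a) $ k = (\<Sum>j<m. col M j $ k * a $ j)" by (rule mult_entry[OF Mc a k])
    also have "\<dots> = (\<Sum>j<m. col K j $ sel k * a $ j)"
      by (rule sum.cong[OF refl]) (use k Kc selN in \<open>auto simp: M_def\<close>)
    also have "\<dots> = (K *\<^sub>v a) $ (sel k)" by (rule mult_entry[OF Kc a selN, symmetric])
    finally show ?thesis .
  qed
  have selinv: "\<And>j. 2*n \<le> j \<Longrightarrow> j < 5*n \<Longrightarrow> sel (j - 2*n) = j \<and> j - 2*n < m" "sel (3*n) = 6*n" "3*n < m"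
    unfolding sel_def m_def by auto
  have detM: "det M \<noteq> 0"
  proof
    assume "det M = 0"
    then obtain v where v: "v \<in> carrier_vec m" "v \<noteq> 0\<^sub>v m" "M *\<^sub>v v = 0\<^sub>v m"
      using det_0_iff_vec_prod_zero_field[OF Mc] by blast
    have Kv: "K *\<^sub>v v = 0\<^sub>v (6*n+1)"
    proof (rule LIN_unique[OF tree _ _ LIN_mult[OF tree Kc[unfolded N_def] v(1) LINK] LIN_zero[OF tree]])
      show "K *\<^sub>v v \<in> carrier_vec (6*n+1)" using Kc v(1) unfolding N_def by auto
      show "0\<^sub>v (6*n+1) \<in> carrier_vec (6*n+1)" by auto
      fix j assume j: "2*n \<le> j" "j < 5*n"
      have "(K *\<^sub>v v) $ j = (M *\<^sub>v v) $ (j - 2*n)" using Mentry[OF v(1), of "j - 2*n"] selinv(1)[OF j] by simp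
      then show "(K *\<^sub>v v) $ j = 0\<^sub>v (6*n+1) $ j" using v(3) selinv(1)[OF j] j unfolding N_def by simp
    next
      have "(K *\<^sub>v v) $ (6*n) = (M *\<^sub>v v) $ (3*n)" using Mentry[OF v(1) selinv(3)] selinv(2) by simp
      then show "(K *\<^sub>v v) $ (6*n) = 0\<^sub>v (6*n+1) $ (6*n)" using v(3) selinv(3) unfolding N_def by simp
    qed (simp add: N_def)
    have "V.lin_dep (set (cols K))"
      by (rule V.lin_depI[OF Kc[unfolded N_def] v(1) v(2) Kv]) (simp add: colsK ss(1))
    then show False using Sind colsK ss(2) by simp
  qed
  have "M \<in> Units (ring_mat TYPE(real) m ())" by (rule det_non_zero_imp_unit[OF Mc detM])
  then obtain B where Bc: "B \<in> carrier_mat m m" and MB: "M * B = 1\<^sub>m m"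
    unfolding Units_def ring_mat_def by auto
  define b where "b = vec m (\<lambda>k. w $ sel k)"
  define a where "a = B *\<^sub>v b"
  have bc: "b \<in> carrier_vec m" unfolding b_def by auto
  have ac: "a \<in> carrier_vec m" unfolding a_def using Bc bc by auto
  have Ma: "M *\<^sub>v a = b" unfolding a_def
    using assoc_mult_mat_vec[OF Mc Bc bc, symmetric] MB bc by simp
  have Kaw: "K *\<^sub>v a = w"
  proof (rule LIN_unique[OF tree _ wc LIN_mult[OF tree Kc[unfolded N_def] ac LINK] L])
    show "K *\<^sub>v a \<in> carrier_vec (6*n+1)" using Kc ac unfolding N_def by auto
    fix j assume j: "2*n \<le> j" "j < 5*n"
    have "(K *\<^sub>v a) $ j = (M *\<^sub>v a) $ (j - 2*n)" using Mentry[OF ac, of "j - 2*n"] selinv(1)[OF j] by simp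
    then show "(K *\<^sub>v a) $ j = w $ j" using Ma selinv(1)[OF j] unfolding b_def by simp
  next
    have "(K *\<^sub>v a) $ (6*n) = (M *\<^sub>v a) $ (3*n)" using Mentry[OF ac selinv(3)] selinv(2) by simp
    then show "(K *\<^sub>v a) $ (6*n) = w $ (6*n)" using Ma selinv(2,3) unfolding b_def by simp
  qed
  define g where "g = vec T (\<lambda>t. \<Sum>j<m. if tj j = t then a $ j else 0)"
  have gc: "g \<in> carrier_vec T" unfolding g_def by auto
  have "H *\<^sub>v g = K *\<^sub>v a"
  proof (rule eq_vecI)
    show "dim_vec (H *\<^sub>v g) = dim_vec (K *\<^sub>v a)" using Hc Kc unfolding N_def by auto
    fix i assume "i < dim_vec (K *\<^sub>v a)"
    then have i: "i < 6*n+1" using Kc unfolding N_def by auto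
    have "(H *\<^sub>v g) $ i = (\<Sum>t<T. col H t $ i * g $ t)" by (rule mult_entry[OF Hc gc i])
    also have "\<dots> = (\<Sum>t<T. \<Sum>j<m. if tj j = t then col H t $ i * a $ j else 0)"
      unfolding g_def by (rule sum.cong[OF refl]) (auto simp: sum_distrib_left intro!: sum.cong)
    also have "\<dots> = (\<Sum>j<m. \<Sum>t<T. if tj j = t then col H t $ i * a $ j else 0)"
      by (rule sum.swap)
    also have "\<dots> = (\<Sum>j<m. col H (tj j) $ i * a $ j)"
      by (rule sum.cong[OF refl]) (use tj in \<open>simp add: sum.delta'\<close>)
    also have "\<dots> = (\<Sum>j<m. col K j $ i * a $ j)"
      by (rule sum.cong[OF refl]) (use tj colK in simp)
    also have "\<dots> = (K *\<^sub>v a) $ i" by (rule mult_entry[OF Kc[unfolded N_def] ac i, symmetric])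
    finally show "(H *\<^sub>v g) $ i = (K *\<^sub>v a) $ i" .
  qed
  then show ?thesis using gc Kaw by auto
qed

theorem lemma2:
  fixes n T :: nat and par :: "nat \<Rightarrow> nat" and r x :: "nat \<Rightarrow> real"
    and ud yd :: "nat \<Rightarrow> real vec" and u y :: "real vec"
  assumes tree: "is_tree n par"
    and lines: "line_params n r x"
    and T: "T > 1"
    and data: "\<forall>t<T. (ud t, yd t) \<in> B_DF n par r x"
    and rank: "vec_space.rank (6*n+1) (data_mat n T ud yd) = 3*n+1"
    and u: "u \<in> carrier_vec (2*n)" and y: "y \<in> carrier_vec (4*n+1)"
  shows "(u, y) \<in> B_DF n par r x \<longleftrightarrow>
    (\<exists>g \<in> carrier_vec T. u @\<^sub>v y = data_mat n T ud yd *\<^sub>v g \<and>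
       (\<forall>i\<in>{1..n}. VV n y i * LL n y i = PP n y i * PP n y i + QQ n y i * QQ n y i))"
proof -
  define H where "H = data_mat n T ud yd"
  define N where "N = 6*n+1"
  have Hc: "H \<in> carrier_mat N T" unfolding H_def N_def data_mat_def by auto
  have colH: "\<And>t. t < T \<Longrightarrow> col H t = ud t @\<^sub>v yd t" unfolding H_def using col_data data by blast
  have LINH: "\<And>t. t < T \<Longrightarrow> LIN n par r x (col H t)"
  proof -
    fix t assume t: "t < T"
    have "ud t \<in> carrier_vec (2*n)" "yd t \<in> carrier_vec (4*n+1)" using data t unfolding B_DF_def by auto
    then show "LIN n par r x (col H t)" unfolding colH[OF t] using bdf_iff[OF tree] data t by blast
  qed
  have wc: "u @\<^sub>v y \<in> carrier_vec N"
    using append_carrier_vec[OF u y] unfolding N_def by (simp add: add.commute add.left_commute)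
  have quad: "(\<forall>i\<in>{1..n}. LL n y i * VV n y i = (PP n y i)^2 + (QQ n y i)^2) \<longleftrightarrow>
     (\<forall>i\<in>{1..n}. VV n y i * LL n y i = PP n y i * PP n y i + QQ n y i * QQ n y i)"
    by (simp add: power2_eq_square mult.commute)
  show ?thesis
  proof
    assume "(u, y) \<in> B_DF n par r x"
    then have L: "LIN n par r x (u @\<^sub>v y)" and Q: "\<forall>i\<in>{1..n}. LL n y i * VV n y i = (PP n y i)^2 + (QQ n y i)^2"
      using bdf_iff[OF tree u y] by auto
    have "\<exists>g\<in>carrier_vec T. u @\<^sub>v y = H *\<^sub>v g"
      by (rule span_part[OF tree Hc[unfolded N_def] LINH rank[folded H_def] wc[unfolded N_def] L])
    then show "\<exists>g \<in> carrier_vec T. u @\<^sub>v y = data_mat n T ud yd *\<^sub>v g \<and>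
       (\<forall>i\<in>{1..n}. VV n y i * LL n y i = PP n y i * PP n y i + QQ n y i * QQ n y i)"
      using Q quad unfolding H_def by blast
  next
    assume "\<exists>g \<in> carrier_vec T. u @\<^sub>v y = data_mat n T ud yd *\<^sub>v g \<and>
       (\<forall>i\<in>{1..n}. VV n y i * LL n y i = PP n y i * PP n y i + QQ n y i * QQ n y i)"
    then obtain g where g: "g \<in> carrier_vec T" and e: "u @\<^sub>v y = H *\<^sub>v g"
      and Q: "\<forall>i\<in>{1..n}. VV n y i * LL n y i = PP n y i * PP n y i + QQ n y i * QQ n y i"
      unfolding H_def by blast
    have "LIN n par r x (u @\<^sub>v y)" unfolding e
      by (rule LIN_mult[OF tree Hc[unfolded N_def] g LINH])
    then show "(u, y) \<in> B_DF n par r x" using bdf_iff[OF tree u y] Q quad by blast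
  qed
qed

end
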